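(* Let $H\in(0,1)$, $T=1$, $\mathbb{T}=[0,1]$, $N=2^{n_0}$ with $n_0\in\mathbb{N}$, and $\mathbb{T}_N=\{jN^{-1}: j=0,\dots,N\}$. Let $(A_\ell,\ell\in\mathbb{N}_0)$, $A_\ell\ge0$, satisfy $A_\ell\le C\ell^{-\alpha}$ for all $\ell>\ell_0$, for some $C>0$, $\ell_0\in\mathbb{N}$, $\alpha>2$. Let $(\beta^H_{\ell,m})$ be independent real-valued fractional Brownian motions with Hurst parameter $H$ and, for $\mu\in\mathbb{N}$, let $\beta^{H,\mu}_{\ell,m}$ be processes on $\mathbb{T}_N$ (the conditionalized random midpoint displacement approximations of $\beta^H_{\ell,m}$) satisfying, for some constants $C'>0$ and $r_H>0$ independent of $\ell,m,\mu$, $$\sup_{t\in\mathbb{T}_N}\|\beta^{H,\mu}_{\ell,m}(t)-\beta^H_{\ell,m}(t)\|_{L^2(\Omega)}\le C'\mu^{-r_H}.$$ Define, for $\kappa\in\mathbb{N}$, $$B_Q^H(t)=\sum_{\ell=0}^\infty\sum_{m=-\ell}^{\ell}\sqrt{A_\ell}\,\beta^H_{\ell,m}(t)Y_{\ell,m},\qquad B_Q^{H,\kappa,\mu}(t)=\sum_{\ell=0}^\kappa\sum_{m=-\ell}^{\ell}\sqrt{A_\ell}\,\beta^{H,\mu}_{\ell,m}(t)Y_{\ell,m}.$$ Then there is a constant $\tilde C$ such that for all $\kappa\ge\ell_0$, $$\sup_{t\in\mathbb{T}_N}\|B_Q^H(t)-B_Q^{H,\kappa,\mu}(t)\|_{L^2(\Omega;L^2(\mathbb{S}^2))}\le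 \tilde C\big(\kappa^{-(\alpha-2)/2}+\sqrt{\operatorname{tr}Q}\,\mu^{-r_H}\big).$$
   Context: $\mathbb{S}^2$ is the unit sphere in $\mathbb{R}^3$; $(Y_{\ell,m})$ are the real-valued spherical harmonics (orthonormal basis of $L^2(\mathbb{S}^2)$); a real-valued fractional Brownian motion with Hurst parameter $H$ is a continuous centered Gaussian process with covariance $\frac12(t^{2H}+s^{2H}-|t-s|^{2H})$. $Q$ is the covariance operator $QY_{\ell,m}=A_\ell Y_{\ell,m}$ with trace $\operatorname{tr}Q=\sum_{\ell\ge0}(2\ell+1)A_\ell$. *)

theory Defs
  imports "HOL-Probability.Probability"
begin

definition sph :: "real \<times> real \<Rightarrow> real \<times> real \<times> real" where
  "sph = (\<lambda>(\<theta>, \<phi>). (sin \<theta> * cos \<phi>, sin \<theta> * sin \<phi>, cos \<theta>))"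

definition sphere_measure :: "(real \<times> real \<times> real) measure" where
  "sphere_measure =
     distr (density (lborel \<Otimes>\<^sub>M lborel)
              (\<lambda>(\<theta>, \<phi>). ennreal (indicator ({0..pi} \<times> {0..<2*pi}) (\<theta>, \<phi>) * sin \<theta>)))
           borel sph"

definition sph_ONB :: "(nat \<Rightarrow> int \<Rightarrow> real \<times> real \<times> real \<Rightarrow> real) \<Rightarrow> bool" where
  "sph_ONB Y \<longleftrightarrow>
     (\<forall>l m. Y l m \<in> borel_measurable sphere_measure) \<and>
     (\<forall>l m l' m'. \<bar>m\<bar> \<le> int l \<longrightarrow> \<bar>m'\<bar> \<le> int l' \<longrightarrow>
         integrable sphere_measure (\<lambda>x. Y l m x * Y l' m' x) \<and>
         (\<integral>x. Y l m x * Y l' m' x \<partial>sphere_measure) = (if l = l' \<and> m = m' then 1 else 0)) \<and>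
     (\<forall>f. f \<in> borel_measurable sphere_measure \<longrightarrow> integrable sphere_measure (\<lambda>x. (f x)\<^sup>2) \<longrightarrow>
         (\<forall>l m. \<bar>m\<bar> \<le> int l \<longrightarrow> (\<integral>x. f x * Y l m x \<partial>sphere_measure) = 0) \<longrightarrow>
         (AE x in sphere_measure. f x = 0))"

definition centered_gaussian_rv :: "'a measure \<Rightarrow> ('a \<Rightarrow> real) \<Rightarrow> bool" where
  "centered_gaussian_rv M X \<longleftrightarrow> X \<in> borel_measurable M \<and>
     ((AE \<omega> in M. X \<omega> = 0) \<or> (\<exists>s>0. distributed M lborel X (normal_density 0 s)))"

definition fBm :: "'a measure \<Rightarrow> real \<Rightarrow> (real \<Rightarrow> 'a \<Rightarrow> real) \<Rightarrow> bool" where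
  "fBm M H X \<longleftrightarrow>
     (\<forall>t\<in>{0..1}. X t \<in> borel_measurable M) \<and>
     (\<forall>\<omega>\<in>space M. continuous_on {0..1} (\<lambda>t. X t \<omega>)) \<and>
     (\<forall>(n::nat) (c::nat \<Rightarrow> real) (ts::nat \<Rightarrow> real). (\<forall>i<n. ts i \<in> {0..1}) \<longrightarrow>
         centered_gaussian_rv M (\<lambda>\<omega>. \<Sum>i<n. c i * X (ts i) \<omega>)) \<and>
     (\<forall>s\<in>{0..1}. \<forall>t\<in>{0..1}. integrable M (\<lambda>\<omega>. X s \<omega> * X t \<omega>) \<and>
         (\<integral>\<omega>. X s \<omega> * X t \<omega> \<partial>M) = (t powr (2*H) + s powr (2*H) - \<bar>t - s\<bar> powr (2*H)) / 2)"

definition L2_sq :: "'a measure \<Rightarrow> ('a \<Rightarrow> real \<times> real \<times> real \<Rightarrow> real) \<Rightarrow> ennreal" where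
  "L2_sq M F = (\<integral>\<^sup>+\<omega>. (\<integral>\<^sup>+x. ennreal ((F \<omega> x)\<^sup>2) \<partial>sphere_measure) \<partial>M)"

definition trunc_field ::
  "(nat \<Rightarrow> real) \<Rightarrow> (nat \<Rightarrow> int \<Rightarrow> real \<Rightarrow> 'a \<Rightarrow> real) \<Rightarrow> (nat \<Rightarrow> int \<Rightarrow> real \<times> real \<times> real \<Rightarrow> real)
    \<Rightarrow> nat \<Rightarrow> real \<Rightarrow> 'a \<Rightarrow> real \<times> real \<times> real \<Rightarrow> real" where
  "trunc_field A b Y L t \<omega> x =
     (\<Sum>l\<le>L. \<Sum>m\<in>{-int l..int l}. sqrt (A l) * b l m t \<omega> * Y l m x)"

definition trQ :: "(nat \<Rightarrow> real) \<Rightarrow> real" where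
  "trQ A = (\<Sum>l. (2 * real l + 1) * A l)"

end

theory Submission
  imports Defs
begin

lemma mvt_step:
  fixes x a :: real
  assumes "x \<ge> 1" "a > 2"
  shows "(a - 2) * (x + 1) powr (1 - a) \<le> x powr (2 - a) - (x + 1) powr (2 - a)"
proof -
  have "\<exists>z. x < z \<and> z < x + 1 \<and> ((x+1) powr (2-a) - x powr (2-a) = ((x+1) - x) * ((2-a) * z powr (2 - a - 1)))"
  proof (rule MVT2)
    fix y assume "x \<le> y" "y \<le> x + 1"
    then have "y > 0" using assms by auto
    then show "((\<lambda>z. z powr (2-a)) has_real_derivative (2-a) * y powr (2 - a - 1)) (at y)"
      by (rule has_real_derivative_powr)
  qed simp
  then obtain z where z: "x < z" "z < x + 1" "(x+1) powr (2-a) - x powr (2-a) = (2-a) * z powr (1 - a)"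
    by (auto simp: algebra_simps)
  have "(x + 1) powr (1 - a) \<le> z powr (1 - a)"
    by (rule powr_mono2') (use assms z in auto)
  then have "(a - 2) * (x + 1) powr (1 - a) \<le> (a - 2) * z powr (1 - a)"
    using assms by (intro mult_left_mono) auto
  then show ?thesis using z(3) by (simp add: algebra_simps)
qed

lemma tail_sum:
  fixes a :: real and k L :: nat
  assumes "k \<ge> 1" "a > 2" "k \<le> L"
  shows "(\<Sum>l\<in>{k<..L}. real l powr (1 - a)) \<le> (real k powr (2 - a) - real L powr (2 - a)) / (a - 2)"
  using assms(3)
proof (induction L rule: dec_induct)
  case base
  then show ?case by simp
next
  case (step L)
  have eq: "{k<..Suc L} = insert (Suc L) {k<..L}" using step by auto
  have "(a - 2) * (real L + 1) powr (1 - a) \<le> real L powr (2 - a) - (real L + 1) powr (2 - a)"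
    by (rule mvt_step) (use assms step in auto)
  then have "real (Suc L) powr (1 - a) \<le> (real L powr (2 - a) - real (Suc L) powr (2 - a)) / (a - 2)"
    using assms by (simp add: field_simps add.commute)
  then show ?case using step eq
    by (simp add: diff_divide_distrib)
qed

lemma onb_expand:
  assumes Y: "sph_ONB Y" and S: "finite S" "S \<subseteq> {(l,m). \<bar>m\<bar> \<le> int l}"
  shows "(\<integral>\<^sup>+x. ennreal ((\<Sum>p\<in>S. c p * Y (fst p) (snd p) x)\<^sup>2) \<partial>sphere_measure)
         = ennreal (\<Sum>p\<in>S. (c p)\<^sup>2)"
proof -
  have I: "integrable sphere_measure (\<lambda>x. Y (fst p) (snd p) x * Y (fst q) (snd q) x)
        \<and> (\<integral>x. Y (fst p) (snd p) x * Y (fst q) (snd q) x \<partial>sphere_measure) = (if p = q then 1 else 0)"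
    if "p \<in> S" "q \<in> S" for p q
  proof -
    obtain l m l' m' where pq: "p = (l,m)" "q = (l',m')" by (cases p, cases q) auto
    have "\<bar>m\<bar> \<le> int l" "\<bar>m'\<bar> \<le> int l'" using that S pq by auto
    then show ?thesis using Y pq unfolding sph_ONB_def by auto
  qed
  have sq: "(\<Sum>p\<in>S. c p * Y (fst p) (snd p) x)\<^sup>2
      = (\<Sum>p\<in>S. \<Sum>q\<in>S. c p * c q * (Y (fst p) (snd p) x * Y (fst q) (snd q) x))" for x
    by (simp add: power2_eq_square sum_product algebra_simps)
  have int: "integrable sphere_measure (\<lambda>x. (\<Sum>p\<in>S. c p * Y (fst p) (snd p) x)\<^sup>2)"
    unfolding sq using I by (auto intro!: integrable_sum integrable_mult_right)
  have "(\<integral>x. (\<Sum>p\<in>S. c p * Y (fst p) (snd p) x)\<^sup>2 \<partial>sphere_measure)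
      = (\<Sum>p\<in>S. \<Sum>q\<in>S. c p * c q * (if p = q then 1 else 0))"
    unfolding sq using I
    by (simp add: integral_sum integrable_sum integrable_mult_right)
  also have "\<dots> = (\<Sum>p\<in>S. (c p)\<^sup>2)"
    using S by (simp add: power2_eq_square if_distrib cong: if_cong)
  finally show ?thesis
    by (subst nn_integral_eq_integral[OF int]) auto
qed

theorem corollary5p2:
  fixes M :: "'a measure" and H :: real and n0 :: nat
    and A :: "nat \<Rightarrow> real" and C \<alpha> :: real and l0 :: nat
    and Y :: "nat \<Rightarrow> int \<Rightarrow> real \<times> real \<times> real \<Rightarrow> real"
    and \<beta> :: "nat \<Rightarrow> int \<Rightarrow> real \<Rightarrow> 'a \<Rightarrow> real"
    and \<beta>\<mu> :: "nat \<Rightarrow> nat \<Rightarrow> int \<Rightarrow> real \<Rightarrow> 'a \<Rightarrow> real"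
    and C' r :: real
  assumes "prob_space M"
    and "0 < H" "H < 1"
    and "\<And>l. A l \<ge> 0"
    and "C > 0" "l0 \<ge> 1" "\<alpha> > 2"
    and "\<And>l. l > l0 \<Longrightarrow> A l \<le> C * real l powr (-\<alpha>)"
    and "sph_ONB Y"
    and "\<And>l m. \<bar>m\<bar> \<le> int l \<Longrightarrow> fBm M H (\<beta> l m)"
    and "prob_space.indep_vars M (\<lambda>_. PiM {0..1::real} (\<lambda>_. borel))
           (\<lambda>(l, m) \<omega>. restrict (\<lambda>t. \<beta> l m t \<omega>) {0..1}) {(l, m). \<bar>m\<bar> \<le> int l}"
    and "C' > 0" "r > 0"
    and "\<And>\<mu> l m j. \<bar>m\<bar> \<le> int l \<Longrightarrow> j \<le> 2 ^ n0 \<Longrightarrow>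
           \<beta>\<mu> \<mu> l m (real j / 2 ^ n0) \<in> borel_measurable M"
    and "\<And>\<mu> l m j. \<mu> \<ge> 1 \<Longrightarrow> \<bar>m\<bar> \<le> int l \<Longrightarrow> j \<le> 2 ^ n0 \<Longrightarrow>
           (\<integral>\<^sup>+\<omega>. ennreal ((\<beta>\<mu> \<mu> l m (real j / 2 ^ n0) \<omega> - \<beta> l m (real j / 2 ^ n0) \<omega>)\<^sup>2) \<partial>M)
             \<le> ennreal ((C' * real \<mu> powr (-r))\<^sup>2)"
  shows "\<exists>Ct. \<forall>\<kappa> \<ge> l0. \<forall>\<mu> \<ge> 1. \<forall>j \<le> (2::nat) ^ n0.
           \<exists>E. (\<lambda>L. L2_sq M (\<lambda>\<omega> x. trunc_field A \<beta> Y L (real j / 2 ^ n0) \<omega> x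
                                   - trunc_field A (\<beta>\<mu> \<mu>) Y \<kappa> (real j / 2 ^ n0) \<omega> x)) \<longlonglongrightarrow> E
             \<and> E \<le> ennreal ((Ct * (real \<kappa> powr (-(\<alpha> - 2) / 2) + sqrt (trQ A) * real \<mu> powr (-r)))\<^sup>2)"
proof -
  interpret P: prob_space M by fact
  note A0 = assms(4) and Cpos = assms(5) and l0 = assms(6) and alpha = assms(7)
    and Abd = assms(8) and Y = assms(9) and fbm = assms(10) and C'pos = assms(12)
    and rpos = assms(13) and bmeas = assms(14) and bbd = assms(15)
  have term_bd: "(2 * real l + 1) * A l \<le> 3 * C * real l powr (1 - \<alpha>)" if "l > l0" for l
  proof -
    have l1: "real l \<ge> 1" using that l0 by auto
    have "(2 * real l + 1) * A l \<le> (3 * real l) * A l"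
      using l1 A0[of l] by (intro mult_right_mono) auto
    also have "\<dots> \<le> (3 * real l) * (C * real l powr (-\<alpha>))"
      using Abd[OF that] l1 by (intro mult_left_mono) auto
    also have "\<dots> = 3 * C * real l powr (1 - \<alpha>)"
      using powr_add[of "real l" 1 "-\<alpha>"] l1 by simp
    finally show ?thesis .
  qed
  have summ: "summable (\<lambda>l. (2 * real l + 1) * A l)"
  proof (rule summable_comparison_test')
    show "summable (\<lambda>l. 3 * C * real l powr (1 - \<alpha>))"
      using alpha by (intro summable_mult) (simp add: summable_real_powr_iff)
    show "norm ((2 * real n + 1) * A n) \<le> 3 * C * real n powr (1 - \<alpha>)" if "n \<ge> Suc l0" for n
      using term_bd[of n] that A0[of n] by auto
  qed
  define T where "T = trQ A"
  have T0: "T \<ge> 0" unfolding T_def trQ_def using A0 by (intro suminf_nonneg[OF summ]) auto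
  have head: "(\<Sum>l\<le>k. (2 * real l + 1) * A l) \<le> T" for k
    unfolding T_def trQ_def using A0 by (intro sum_le_suminf[OF summ]) auto
  define K where "K = 3 * C / (\<alpha> - 2)"
  have K0: "K \<ge> 0" unfolding K_def using Cpos alpha by auto
  have tail: "(\<Sum>l\<in>{k<..L}. (2 * real l + 1) * A l) \<le> K * real k powr (2 - \<alpha>)"
    if "k \<ge> l0" "k \<le> L" for k L
  proof -
    have "(\<Sum>l\<in>{k<..L}. (2 * real l + 1) * A l) \<le> (\<Sum>l\<in>{k<..L}. 3 * C * real l powr (1 - \<alpha>))"
      using that by (intro sum_mono term_bd) auto
    also have "\<dots> = 3 * C * (\<Sum>l\<in>{k<..L}. real l powr (1 - \<alpha>))"
      by (simp add: sum_distrib_left)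
    also have "\<dots> \<le> 3 * C * ((real k powr (2 - \<alpha>) - real L powr (2 - \<alpha>)) / (\<alpha> - 2))"
      using tail_sum[of k \<alpha> L] that l0 alpha Cpos by (intro mult_left_mono) auto
    also have "\<dots> \<le> 3 * C * (real k powr (2 - \<alpha>) / (\<alpha> - 2))"
      using alpha Cpos by (intro mult_left_mono divide_right_mono) auto
    finally show ?thesis unfolding K_def by simp
  qed
  define Ct where "Ct = max C' (sqrt K)"
  show ?thesis
  proof (intro exI[of _ Ct] allI impI)
    fix \<kappa> \<mu> j :: nat
    assume \<kappa>: "\<kappa> \<ge> l0" and \<mu>: "\<mu> \<ge> 1" and j: "j \<le> 2 ^ n0"
    define t where "t = real j / 2 ^ n0"
    have t: "0 \<le> t" "t \<le> 1" using j unfolding t_def by (auto simp: field_simps)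
    define c where "c \<omega> p = sqrt (A (fst p)) * (\<beta> (fst p) (snd p) t \<omega>
        - (if fst p \<le> \<kappa> then \<beta>\<mu> \<mu> (fst p) (snd p) t \<omega> else 0))" for \<omega> p
    define S where "S L = Sigma {..L} (\<lambda>l. {-int l..int l})" for L :: nat
    define g where "g p = (\<integral>\<^sup>+\<omega>. ennreal ((c \<omega> p)\<^sup>2) \<partial>M)" for p
    define F where "F L = L2_sq M (\<lambda>\<omega> x. trunc_field A \<beta> Y L t \<omega> x
                                   - trunc_field A (\<beta>\<mu> \<mu>) Y \<kappa> t \<omega> x)" for L
    have Sfin: "finite (S L)" for L unfolding S_def by auto
    have Sub: "S L \<subseteq> {(l,m). \<bar>m\<bar> \<le> int l}" for L unfolding S_def by auto
    have expand: "trunc_field A b Y L t \<omega> x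
        = (\<Sum>p\<in>S L. sqrt (A (fst p)) * b (fst p) (snd p) t \<omega> * Y (fst p) (snd p) x)" for b L \<omega> x
      unfolding trunc_field_def S_def by (subst sum.Sigma) (auto simp: split_def)
    have diff: "trunc_field A \<beta> Y L t \<omega> x - trunc_field A (\<beta>\<mu> \<mu>) Y \<kappa> t \<omega> x
        = (\<Sum>p\<in>S L. c \<omega> p * Y (fst p) (snd p) x)" if "\<kappa> \<le> L" for L \<omega> x
    proof -
      have "S \<kappa> = S L \<inter> {p. fst p \<le> \<kappa>}" using that by (auto simp: S_def)
      then have r: "(\<Sum>p\<in>S \<kappa>. h p) = (\<Sum>p\<in>S L. if fst p \<le> \<kappa> then h p else 0)" for h :: "nat \<times> int \<Rightarrow> real"
        using Sfin by (simp add: sum.inter_restrict)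
      have "trunc_field A \<beta> Y L t \<omega> x - trunc_field A (\<beta>\<mu> \<mu>) Y \<kappa> t \<omega> x
        = (\<Sum>p\<in>S L. sqrt (A (fst p)) * \<beta> (fst p) (snd p) t \<omega> * Y (fst p) (snd p) x
             - (if fst p \<le> \<kappa> then sqrt (A (fst p)) * \<beta>\<mu> \<mu> (fst p) (snd p) t \<omega> * Y (fst p) (snd p) x else 0))"
        unfolding expand r by (simp add: sum_subtractf)
      also have "\<dots> = (\<Sum>p\<in>S L. c \<omega> p * Y (fst p) (snd p) x)"
        by (intro sum.cong) (auto simp: c_def algebra_simps)
      finally show ?thesis .
    qed
    have bm1: "(\<lambda>\<omega>. \<beta> l m t \<omega>) \<in> borel_measurable M" if "\<bar>m\<bar> \<le> int l" for l m
      using fbm[OF that] t unfolding fBm_def by auto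
    have bm2: "(\<lambda>\<omega>. \<beta>\<mu> \<mu> l m t \<omega>) \<in> borel_measurable M" if "\<bar>m\<bar> \<le> int l" for l m
      using bmeas[OF that j] unfolding t_def by simp
    have meas: "(\<lambda>\<omega>. c \<omega> p) \<in> borel_measurable M" if "p \<in> S L" for p L
    proof -
      obtain l m where p: "p = (l, m)" by (cases p)
      have lm: "\<bar>m\<bar> \<le> int l" using that p Sub by auto
      have "(\<lambda>\<omega>. \<beta> l m t \<omega>) \<in> borel_measurable M"
        using fbm[OF lm] t unfolding fBm_def by auto
      moreover have "(\<lambda>\<omega>. \<beta>\<mu> \<mu> l m t \<omega>) \<in> borel_measurable M"
        using bmeas[OF lm j] unfolding t_def by simp
      ultimately show ?thesis unfolding c_def p by (cases "l \<le> \<kappa>") simp_all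
    qed
    have Feq: "F L = (\<Sum>p\<in>S L. g p)" if "\<kappa> \<le> L" for L
    proof -
      have "F L = (\<integral>\<^sup>+\<omega>. ennreal (\<Sum>p\<in>S L. (c \<omega> p)\<^sup>2) \<partial>M)"
        unfolding F_def L2_sq_def diff[OF that] onb_expand[OF Y Sfin Sub] ..
      also have "\<dots> = (\<integral>\<^sup>+\<omega>. (\<Sum>p\<in>S L. ennreal ((c \<omega> p)\<^sup>2)) \<partial>M)"
        by (simp add: sum_ennreal)
      also have "\<dots> = (\<Sum>p\<in>S L. g p)"
        unfolding g_def using meas by (intro nn_integral_sum) auto
      finally show ?thesis .
    qed
    define D where "D l = (if l \<le> \<kappa> then (C' * real \<mu> powr (-r))\<^sup>2 else 1)" for l
    have gb: "g p \<le> ennreal (A (fst p) * D (fst p))" if "p \<in> S L" for p L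
    proof -
      obtain l m where p: "p = (l, m)" by (cases p)
      have lm: "\<bar>m\<bar> \<le> int l" using that p Sub by auto
      show ?thesis
      proof (cases "l \<le> \<kappa>")
        case True
        have "g p = (\<integral>\<^sup>+\<omega>. ennreal (A l) * ennreal ((\<beta>\<mu> \<mu> l m t \<omega> - \<beta> l m t \<omega>)\<^sup>2) \<partial>M)"
          unfolding g_def c_def p using True A0[of l]
          by (intro nn_integral_cong) (simp add: power_mult_distrib ennreal_mult' power2_commute)
        also have "\<dots> = ennreal (A l) * (\<integral>\<^sup>+\<omega>. ennreal ((\<beta>\<mu> \<mu> l m t \<omega> - \<beta> l m t \<omega>)\<^sup>2) \<partial>M)"
          using bm1[OF lm] bm2[OF lm] by (intro nn_integral_cmult) simp
        also have "\<dots> \<le> ennreal (A l) * ennreal ((C' * real \<mu> powr (-r))\<^sup>2)"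
          using bbd[OF \<mu> lm j] unfolding t_def by (intro mult_left_mono) auto
        also have "\<dots> = ennreal (A (fst p) * D (fst p))"
          using True A0[of l] by (simp add: p D_def ennreal_mult')
        finally show ?thesis .
      next
        case False
        have int: "integrable M (\<lambda>\<omega>. \<beta> l m t \<omega> * \<beta> l m t \<omega>)"
          and ev: "(\<integral>\<omega>. \<beta> l m t \<omega> * \<beta> l m t \<omega> \<partial>M) = (t powr (2*H) + t powr (2*H) - \<bar>t - t\<bar> powr (2*H)) / 2"
          using fbm[OF lm] t unfolding fBm_def by (meson atLeastAtMost_iff)+
        have ev2: "(\<integral>\<omega>. \<beta> l m t \<omega> * \<beta> l m t \<omega> \<partial>M) = t powr (2*H)"
          using ev by simp
        have "g p = (\<integral>\<^sup>+\<omega>. ennreal (A l) * ennreal (\<beta> l m t \<omega> * \<beta> l m t \<omega>) \<partial>M)"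
          unfolding g_def
        proof (intro nn_integral_cong)
          fix \<omega>
          have "(c \<omega> p)\<^sup>2 = A l * (\<beta> l m t \<omega> * \<beta> l m t \<omega>)"
            unfolding c_def p using False A0[of l] by (simp add: power_mult_distrib power2_eq_square[symmetric])
          then show "ennreal ((c \<omega> p)\<^sup>2) = ennreal (A l) * ennreal (\<beta> l m t \<omega> * \<beta> l m t \<omega>)"
            using A0[of l] by (simp add: ennreal_mult')
        qed
        also have "\<dots> = ennreal (A l) * (\<integral>\<^sup>+\<omega>. ennreal (\<beta> l m t \<omega> * \<beta> l m t \<omega>) \<partial>M)"
          using int by (intro nn_integral_cmult) auto
        also have "(\<integral>\<^sup>+\<omega>. ennreal (\<beta> l m t \<omega> * \<beta> l m t \<omega>) \<partial>M) = ennreal (t powr (2*H))"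
          using int ev2 by (subst nn_integral_eq_integral) auto
        also have "ennreal (A l) * ennreal (t powr (2*H)) \<le> ennreal (A l) * ennreal 1"
          using t assms(2) by (intro mult_left_mono ennreal_leI) (auto intro: powr_le1)
        also have "\<dots> = ennreal (A (fst p) * D (fst p))"
          using False by (simp add: p D_def)
        finally show ?thesis .
      qed
    qed
    define B where "B = T * (C' * real \<mu> powr (-r))\<^sup>2 + K * real \<kappa> powr (2 - \<alpha>)"
    have Fb: "F L \<le> ennreal B" if "\<kappa> \<le> L" for L
    proof -
      have D0: "D l \<ge> 0" for l unfolding D_def by auto
      have "F L \<le> (\<Sum>p\<in>S L. ennreal (A (fst p) * D (fst p)))"
        unfolding Feq[OF that] by (intro sum_mono gb) auto
      also have "\<dots> = ennreal (\<Sum>p\<in>S L. A (fst p) * D (fst p))"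
        using A0 D0 by (intro sum_ennreal) auto
      also have "(\<Sum>p\<in>S L. A (fst p) * D (fst p)) = (\<Sum>l\<le>L. (2 * real l + 1) * A l * D l)"
      proof -
        have "(\<Sum>l\<le>L. \<Sum>m\<in>{-int l..int l}. A l * D l) = (\<Sum>p\<in>S L. A (fst p) * D (fst p))"
          unfolding S_def by (subst sum.Sigma) (auto simp: split_def)
        moreover have "(\<Sum>m\<in>{-int l..int l}. A l * D l) = (2 * real l + 1) * A l * D l" for l
        proof -
          have "card {-int l..int l} = 2 * l + 1" by simp
          then show ?thesis by simp
        qed
        ultimately show ?thesis by (simp add: mult.assoc)
      qed
      also have "\<dots> = (\<Sum>l\<le>\<kappa>. (2 * real l + 1) * A l * D l) + (\<Sum>l\<in>{\<kappa><..L}. (2 * real l + 1) * A l * D l)"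
      proof -
        have "{..L} = {..\<kappa>} \<union> {\<kappa><..L}" using that by auto
        then show ?thesis by (simp add: sum.union_disjoint ivl_disj_int)
      qed
      also have "(\<Sum>l\<le>\<kappa>. (2 * real l + 1) * A l * D l) = (C' * real \<mu> powr (-r))\<^sup>2 * (\<Sum>l\<le>\<kappa>. (2 * real l + 1) * A l)"
        by (simp add: D_def sum_distrib_left mult.commute)
      also have "(\<Sum>l\<in>{\<kappa><..L}. (2 * real l + 1) * A l * D l) = (\<Sum>l\<in>{\<kappa><..L}. (2 * real l + 1) * A l)"
        by (intro sum.cong) (auto simp: D_def)
      also have "(C' * real \<mu> powr (-r))\<^sup>2 * (\<Sum>l\<le>\<kappa>. (2 * real l + 1) * A l) + (\<Sum>l\<in>{\<kappa><..L}. (2 * real l + 1) * A l) \<le> B"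
        unfolding B_def
      proof (intro add_mono)
        show "(C' * real \<mu> powr (-r))\<^sup>2 * (\<Sum>l\<le>\<kappa>. (2 * real l + 1) * A l) \<le> T * (C' * real \<mu> powr (-r))\<^sup>2"
          using head[of \<kappa>] by (subst mult.commute) (intro mult_right_mono, auto)
      qed (use tail[OF \<kappa> that] in auto)
      finally show ?thesis by (simp add: ennreal_leI)
    qed
    have Smono: "S L \<subseteq> S L'" if "L \<le> L'" for L L' using that unfolding S_def by auto
    have inc: "incseq (\<lambda>L. F (L + \<kappa>))"
      unfolding incseq_def
      by (auto simp: Feq intro!: sum_mono2 Sfin Smono)
    have lim: "F \<longlonglongrightarrow> (SUP L. F (L + \<kappa>))"
      by (rule LIMSEQ_offset[of _ \<kappa>]) (rule LIMSEQ_SUP[OF inc])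
    have Ebd: "(SUP L. F (L + \<kappa>)) \<le> ennreal B"
      by (intro SUP_least Fb) auto
    have fin: "B \<le> (Ct * (real \<kappa> powr (-(\<alpha> - 2) / 2) + sqrt (trQ A) * real \<mu> powr (-r)))\<^sup>2"
    proof -
      define a where "a = real \<kappa> powr (-(\<alpha> - 2) / 2)"
      define b where "b = sqrt T * real \<mu> powr (-r)"
      have k0: "real \<kappa> > 0" using \<kappa> l0 by auto
      have a0: "a \<ge> 0" and b0: "b \<ge> 0" unfolding a_def b_def using T0 by auto
      have a2: "a\<^sup>2 = real \<kappa> powr (2 - \<alpha>)"
      proof -
        have e: "-(\<alpha> - 2) / 2 + -(\<alpha> - 2) / 2 = 2 - \<alpha>" by (simp add: field_simps)
        show ?thesis unfolding a_def power2_eq_square powr_add[symmetric] e ..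
      qed
      have b2: "b\<^sup>2 = T * (real \<mu> powr (-r))\<^sup>2"
        unfolding b_def using T0 by (simp add: power_mult_distrib)
      have Ct1: "C'\<^sup>2 \<le> Ct\<^sup>2" unfolding Ct_def using C'pos
        by (intro power_mono) auto
      have Ct2: "K \<le> Ct\<^sup>2"
      proof -
        have "sqrt K \<le> Ct" unfolding Ct_def by auto
        then have "(sqrt K)\<^sup>2 \<le> Ct\<^sup>2" using K0 by (intro power_mono) auto
        then show ?thesis using K0 by simp
      qed
      have "B = C'\<^sup>2 * b\<^sup>2 + K * a\<^sup>2" unfolding B_def a2 b2 by (simp add: power_mult_distrib)
      also have "\<dots> \<le> Ct\<^sup>2 * b\<^sup>2 + Ct\<^sup>2 * a\<^sup>2"
        using Ct1 Ct2 by (intro add_mono mult_right_mono) auto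
      also have "\<dots> \<le> Ct\<^sup>2 * (a + b)\<^sup>2"
        using a0 b0 by (simp add: power2_sum algebra_simps)
      finally show ?thesis unfolding a_def b_def T_def by (simp add: power_mult_distrib)
    qed
    show "\<exists>E. (\<lambda>L. L2_sq M (\<lambda>\<omega> x. trunc_field A \<beta> Y L (real j / 2 ^ n0) \<omega> x
                                   - trunc_field A (\<beta>\<mu> \<mu>) Y \<kappa> (real j / 2 ^ n0) \<omega> x)) \<longlonglongrightarrow> E
             \<and> E \<le> ennreal ((Ct * (real \<kappa> powr (-(\<alpha> - 2) / 2) + sqrt (trQ A) * real \<mu> powr (-r)))\<^sup>2)"
      using lim Ebd fin unfolding F_def t_def
      by (intro exI[of _ "SUP L. F (L + \<kappa>)"]) (auto simp: F_def t_def intro: order_trans ennreal_leI)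
  qed
qed

end
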